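(* QEPmin is in the hard case if and only if $g_0\perp\mathcal U$ and $\|(H-\lambda_{\min}(H)I)^{\dagger}g_0\|_2\le\gamma$, where $\lambda_{\min}(H)$ is the smallest eigenvalue of $H$ and $\mathcal U$ is the eigenspace of $H$ associated with $\lambda_{\min}(H)$.
   Context: Let $A\in\mathbb{R}^{n\times n}$ be symmetric, $C\in\mathbb{R}^{n\times m}$ ($m<n$) full column rank, $b\in\mathbb{R}^m$, $n_0=C(C^{\top}C)^{-1}b$ with $\|n_0\|<1$, $\gamma=\sqrt{1-\|n_0\|^2}$, $P=I-C(C^{\top}C)^{-1}C^{\top}$ (orthogonal projector onto $\mathcal N(C^{\top})$), $b_0=PAn_0$, assumed nonzero. Let $S_1\in\mathbb{R}^{n\times(n-m)}$ have orthonormal columns spanning $\mathcal N(C^{\top})$, $H=S_1^{\top}AS_1$, $g_0=S_1^{\top}b_0$. $X^\dagger$ is the Moore–Penrose inverse. QEPmin: minimize $\lambda$ over pairs $(\lambda,z)$ with $\lambda\in\mathbb{R}$, $0\neq z\in\mathcal N(C^{\top})$ and $(PAP-\lambda I)^2z=\gamma^{-2}b_0b_0^{\top}z$. QEPmin is in the hard case if it has a minimizer $(\lambda_*,z_* )$ with $b_0^{\top}z_*=0$; otherwise in the easy case. *)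

theory Defs
  imports "HOL-Analysis.Analysis"
begin

definition is_mp_inverse :: "real^'n^'m \<Rightarrow> real^'m^'n \<Rightarrow> bool" where
  "is_mp_inverse X Y \<longleftrightarrow> X ** Y ** X = X \<and> Y ** X ** Y = Y \<and>
     transpose (X ** Y) = X ** Y \<and> transpose (Y ** X) = Y ** X"

definition mp_inverse :: "real^'n^'m \<Rightarrow> real^'m^'n" where
  "mp_inverse X = (THE Y. is_mp_inverse X Y)"

definition eigenvalues_of :: "real^'n^'n \<Rightarrow> real set" where
  "eigenvalues_of M = {l. \<exists>v. v \<noteq> 0 \<and> M *v v = l *\<^sub>R v}"

definition lambda_min :: "real^'n^'n \<Rightarrow> real" where
  "lambda_min M = Min (eigenvalues_of M)"

definition eigenspace_of :: "real^'n^'n \<Rightarrow> real \<Rightarrow> (real^'n) set" where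
  "eigenspace_of M lam = {v. M *v v = lam *\<^sub>R v}"

definition n0_of :: "real^'m^'n \<Rightarrow> real^'m \<Rightarrow> real^'n" where
  "n0_of C b = C *v (matrix_inv (transpose C ** C) *v b)"

definition gamma_of :: "real^'m^'n \<Rightarrow> real^'m \<Rightarrow> real" where
  "gamma_of C b = sqrt (1 - (norm (n0_of C b))\<^sup>2)"

definition P_of :: "real^'m^'n \<Rightarrow> real^'n^'n" where
  "P_of C = mat 1 - C ** matrix_inv (transpose C ** C) ** transpose C"

definition b0_of :: "real^'n^'n \<Rightarrow> real^'m^'n \<Rightarrow> real^'m \<Rightarrow> real^'n" where
  "b0_of A C b = P_of C *v (A *v n0_of C b)"

definition qep_feasible :: "real^'n^'n \<Rightarrow> real^'m^'n \<Rightarrow> real^'m \<Rightarrow> real \<Rightarrow> real^'n \<Rightarrow> bool" where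
  "qep_feasible A C b lam z \<longleftrightarrow>
     z \<noteq> 0 \<and> transpose C *v z = 0 \<and>
     (let M = P_of C ** A ** P_of C - lam *\<^sub>R mat 1; b0 = b0_of A C b in
       M *v (M *v z) = (1 / (gamma_of C b)\<^sup>2) *\<^sub>R ((b0 \<bullet> z) *\<^sub>R b0))"

definition qep_minimizer :: "real^'n^'n \<Rightarrow> real^'m^'n \<Rightarrow> real^'m \<Rightarrow> real \<Rightarrow> real^'n \<Rightarrow> bool" where
  "qep_minimizer A C b lam z \<longleftrightarrow>
     qep_feasible A C b lam z \<and> (\<forall>mu w. qep_feasible A C b mu w \<longrightarrow> lam \<le> mu)"

definition qep_hard_case :: "real^'n^'n \<Rightarrow> real^'m^'n \<Rightarrow> real^'m \<Rightarrow> bool" where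
  "qep_hard_case A C b \<longleftrightarrow>
     (\<exists>lam z. qep_minimizer A C b lam z \<and> b0_of A C b \<bullet> z = 0)"

end

theory Submission
  imports Defs
begin



lemma sym_dot:
  fixes K :: "real^'k^'k"
  assumes "transpose K = K"
  shows "(K *v x) \<bullet> y = x \<bullet> (K *v y)"
proof -
  have "x \<bullet> (K *v y) = (x v* K) \<bullet> y" by (simp add: dot_lmul_matrix)
  also have "x v* K = K *v x" by (metis assms transpose_matrix_vector)
  finally show ?thesis by simp
qed

lemma scal_mat: "((c::real) *\<^sub>R mat 1 :: real^'k^'k) *v x = c *\<^sub>R x"
  by (simp add: vec_eq_iff matrix_vector_mult_def mat_def if_distrib if_distribR sum.delta cong: if_cong)

lemma quad_zero: "0 \<le> (c::real) \<Longrightarrow> (\<And>t. 0 \<le> 2 * t * a + t^2 * c) \<Longrightarrow> a = 0"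
proof -
  assume c0: "0 \<le> c" and q: "\<And>t. 0 \<le> 2 * t * a + t^2 * c"
  define t where "t = - a / (c+1)"
  have ta: "a = - t * (c+1)" using c0 by (simp add: t_def field_simps)
  have "0 \<le> 2 * t * a + t^2 * c" by (rule q)
  also have "2 * t * a + t^2 * c = - (t^2 * (c+2))" by (simp add: ta power2_eq_square algebra_simps)
  finally have "t^2 * (c+2) \<le> 0" by simp
  hence "t^2 = 0" using c0 by (smt (verit) mult_pos_pos zero_less_power2 zero_le_power2)
  thus "a = 0" using ta by simp
qed

lemma psd_zero:
  fixes K :: "real^'k^'k"
  assumes sym: "transpose K = K" and psd: "\<And>x. 0 \<le> x \<bullet> (K *v x)"
    and v: "v \<bullet> (K *v v) = 0"
  shows "K *v v = 0"
proof -
  define w where "w = K *v v"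
  define a where "a = w \<bullet> w"
  define c where "c = w \<bullet> (K *v w)"
  have c0: "0 \<le> c" using psd c_def by simp
  have vw: "v \<bullet> (K *v w) = a" using sym_dot[OF sym, of v w] a_def w_def by simp
  have wv: "w \<bullet> (K *v v) = a" using a_def w_def by simp
  have q: "0 \<le> 2 * t * a + t^2 * c" for t
  proof -
    have "0 \<le> (v + t *\<^sub>R w) \<bullet> (K *v (v + t *\<^sub>R w))" by (rule psd)
    also have "\<dots> = v \<bullet> (K *v v) + t * (v \<bullet> (K *v w)) + t * (w \<bullet> (K *v v)) + t^2 * (w \<bullet> (K *v w))"
      by (simp add: matrix_vector_right_distrib matrix_vector_mult_scaleR inner_add_left inner_add_right power2_eq_square algebra_simps)
    finally show ?thesis using v vw wv c_def by (simp add: algebra_simps)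
  qed
  have "a = 0" by (rule quad_zero[OF c0 q])
  thus ?thesis using a_def w_def by simp
qed

lemma rayleigh_min:
  fixes H :: "real^'k^'k"
  assumes sym: "transpose H = H"
  shows "\<exists>mu v. v \<noteq> 0 \<and> H *v v = mu *\<^sub>R v \<and> (\<forall>x. mu * (x \<bullet> x) \<le> x \<bullet> (H *v x))"
proof -
  have cont: "continuous_on (sphere 0 1) (\<lambda>x::real^'k. x \<bullet> (H *v x))"
    by (intro continuous_intros linear_continuous_on bounded_linear_inner_right) (simp add: linear_linear)
  have ne: "sphere (0::real^'k) 1 \<noteq> {}"
    using vector_choose_size[of 1] by (auto simp: sphere_def)
  obtain v where vS: "v \<in> sphere 0 1" and vmin: "\<And>y. y \<in> sphere 0 1 \<Longrightarrow> v \<bullet> (H *v v) \<le> y \<bullet> (H *v y)"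
    using continuous_attains_inf[OF compact_sphere ne cont] by blast
  define mu where "mu = v \<bullet> (H *v v)"
  have nv: "norm v = 1" using vS by simp
  have bound: "mu * (x \<bullet> x) \<le> x \<bullet> (H *v x)" for x
  proof (cases "x = 0")
    case True thus ?thesis by simp
  next
    case False
    define y where "y = (1 / norm x) *\<^sub>R x"
    have "y \<in> sphere 0 1" using False by (simp add: y_def)
    hence "mu \<le> y \<bullet> (H *v y)" using vmin mu_def by simp
    also have "\<dots> = (x \<bullet> (H *v x)) / (norm x)^2"
      by (simp add: y_def matrix_vector_mult_scaleR power2_eq_square)
    finally have "mu * (norm x)^2 \<le> x \<bullet> (H *v x)" using False by (simp add: field_simps)
    thus ?thesis by (simp add: power2_norm_eq_inner)
  qed
  define K where "K = H - mu *\<^sub>R mat 1"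
  have Kx: "K *v x = H *v x - mu *\<^sub>R x" for x
    by (simp add: K_def matrix_vector_mult_diff_rdistrib scal_mat)
  have symK: "transpose K = K"
    using sym by (simp add: K_def transpose_def vec_eq_iff mat_def)
  have psd: "0 \<le> x \<bullet> (K *v x)" for x
    using bound[of x] by (simp add: Kx inner_diff_right)
  have "v \<bullet> (K *v v) = 0" using nv by (simp add: Kx inner_diff_right mu_def power2_norm_eq_inner[symmetric])
  hence "K *v v = 0" by (rule psd_zero[OF symK psd])
  hence "H *v v = mu *\<^sub>R v" by (simp add: Kx)
  moreover have "v \<noteq> 0" using nv by auto
  ultimately show ?thesis using bound by blast
qed




lemma eig_finite:
  fixes H :: "real^'k^'k"
  assumes sym: "transpose H = H"
  shows "finite (eigenvalues_of H)"
proof -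
  let ?E = "eigenvalues_of H"
  define f where "f l = (SOME v. v \<noteq> 0 \<and> H *v v = l *\<^sub>R v)" for l
  have fP: "f l \<noteq> 0 \<and> H *v f l = l *\<^sub>R f l" if "l \<in> ?E" for l
    using that unfolding eigenvalues_of_def f_def by (metis (mono_tags, lifting) mem_Collect_eq someI_ex)
  have inj: "inj_on f ?E"
  proof (rule inj_onI)
    fix l1 l2 assume l: "l1 \<in> ?E" "l2 \<in> ?E" "f l1 = f l2"
    hence "l1 *\<^sub>R f l1 = l2 *\<^sub>R f l1" using fP by metis
    thus "l1 = l2" using fP[OF l(1)] by (simp add: scaleR_cancel_right)
  qed
  have orth: "pairwise orthogonal (f ` ?E)"
  proof (rule pairwiseI)
    fix x y assume xy: "x \<in> f ` ?E" "y \<in> f ` ?E" "x \<noteq> y"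
    then obtain l1 l2 where l: "l1 \<in> ?E" "l2 \<in> ?E" "x = f l1" "y = f l2" by blast
    hence ne: "l1 \<noteq> l2" using xy(3) by blast
    have "l1 * (x \<bullet> y) = (H *v x) \<bullet> y" using fP[OF l(1)] l(3) by simp
    also have "\<dots> = x \<bullet> (H *v y)" by (rule sym_dot[OF sym])
    also have "\<dots> = l2 * (x \<bullet> y)" using fP[OF l(2)] l(4) by simp
    finally have "(l1 - l2) * (x \<bullet> y) = 0" by (simp add: algebra_simps)
    thus "orthogonal x y" using ne by (simp add: orthogonal_def)
  qed
  have "finite (f ` ?E)" by (rule pairwise_orthogonal_imp_finite[OF orth])
  thus ?thesis using finite_imageD[OF _ inj] by blast
qed

lemma lambda_min_facts:
  fixes H :: "real^'k^'k"
  assumes sym: "transpose H = H"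
  shows "\<exists>v. v \<noteq> 0 \<and> H *v v = lambda_min H *\<^sub>R v"
    and "\<And>x. lambda_min H * (x \<bullet> x) \<le> x \<bullet> (H *v x)"
proof -
  obtain mu v where v: "v \<noteq> 0" "H *v v = mu *\<^sub>R v" and b: "\<And>x. mu * (x \<bullet> x) \<le> x \<bullet> (H *v x)"
    using rayleigh_min[OF sym] by blast
  have "lambda_min H = mu"
    unfolding lambda_min_def
  proof (rule Min_eqI[OF eig_finite[OF sym]])
    show "mu \<in> eigenvalues_of H" using v unfolding eigenvalues_of_def by blast
    fix l assume "l \<in> eigenvalues_of H"
    then obtain w where w: "w \<noteq> 0" "H *v w = l *\<^sub>R w" unfolding eigenvalues_of_def by blast
    have "mu * (w \<bullet> w) \<le> l * (w \<bullet> w)" using b[of w] w by simp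
    moreover have "0 < w \<bullet> w" using w by simp
    ultimately show "mu \<le> l" by simp
  qed
  thus "\<exists>v. v \<noteq> 0 \<and> H *v v = lambda_min H *\<^sub>R v" "\<And>x. lambda_min H * (x \<bullet> x) \<le> x \<bullet> (H *v x)"
    using v b by auto
qed




lemma mp_unique:
  fixes X :: "real^'n^'m"
  assumes a: "is_mp_inverse X Y1" and b: "is_mp_inverse X Y2"
  shows "Y1 = Y2"
proof -
  note T = matrix_transpose_mul
  have a1: "X ** Y1 ** X = X" and a2: "Y1 ** X ** Y1 = Y1" and a3: "transpose (X ** Y1) = X ** Y1"
    and a4: "transpose (Y1 ** X) = Y1 ** X" using a by (auto simp: is_mp_inverse_def)
  have b1: "X ** Y2 ** X = X" and b2: "Y2 ** X ** Y2 = Y2" and b3: "transpose (X ** Y2) = X ** Y2"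
    and b4: "transpose (Y2 ** X) = Y2 ** X" using b by (auto simp: is_mp_inverse_def)
  have tX1: "transpose X = transpose X ** (X ** Y2)"
    by (metis b1 b3 T)
  have tX2: "transpose X = (Y1 ** X) ** transpose X"
    by (metis a1 a4 T matrix_mul_assoc)
  have "Y1 = Y1 ** (X ** Y1)" using a2 by (simp add: matrix_mul_assoc)
  also have "\<dots> = Y1 ** (transpose Y1 ** transpose X)" by (metis a3 T)
  also have "\<dots> = Y1 ** (transpose Y1 ** (transpose X ** (X ** Y2)))" using tX1 by metis
  also have "\<dots> = Y1 ** (transpose (X ** Y1) ** (X ** Y2))" by (simp add: T matrix_mul_assoc)
  also have "\<dots> = Y1 ** X ** Y2" using a2 a3 by (simp add: matrix_mul_assoc)
  finally have e1: "Y1 = Y1 ** X ** Y2" .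
  have "Y2 = (Y2 ** X) ** Y2" using b2 by simp
  also have "\<dots> = (transpose X ** transpose Y2) ** Y2" by (metis b4 T)
  also have "\<dots> = (((Y1 ** X) ** transpose X) ** transpose Y2) ** Y2" using tX2 by metis
  also have "\<dots> = (Y1 ** X) ** (transpose (Y2 ** X) ** Y2)" by (simp add: T matrix_mul_assoc)
  also have "\<dots> = Y1 ** X ** Y2" using b2 b4 by (simp add: matrix_mul_assoc)
  finally show ?thesis using e1 by simp
qed




lemma mp_sym:
  fixes K :: "real^'k^'k"
  assumes sym: "transpose K = K" and psd: "\<And>x. 0 \<le> x \<bullet> (K *v x)"
  shows "\<And>g. (\<And>u. K *v u = 0 \<Longrightarrow> g \<bullet> u = 0) \<Longrightarrow>
           K *v (mp_inverse K *v g) = g \<and> (\<forall>u. K *v u = 0 \<longrightarrow> u \<bullet> (mp_inverse K *v g) = 0)"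
proof -
  define U where "U = {u. K *v u = 0}"
  have subU: "subspace U"
    unfolding subspace_def U_def by (simp add: matrix_vector_right_distrib matrix_vector_mult_scaleR)
  obtain B where BU: "B \<subseteq> U" and orth: "pairwise orthogonal B" and n1: "\<And>x. x \<in> B \<Longrightarrow> norm x = 1"
    and spB: "span B = U"
    using orthonormal_basis_subspace[OF subU] by metis
  have finB: "finite B" by (rule pairwise_orthogonal_imp_finite[OF orth])
  have bb: "b \<bullet> b = 1" if "b \<in> B" for b
    using n1[OF that] by (metis norm_eq_1)
  define PiM :: "real^'k^'k" where "PiM = (\<chi> i j. \<Sum>b\<in>B. b$i * b$j)"
  have Pv: "PiM *v v = (\<Sum>b\<in>B. (b \<bullet> v) *\<^sub>R b)" for v
    unfolding PiM_def
    by (simp add: vec_eq_iff matrix_vector_mult_def inner_vec_def sum_component sum_distrib_left sum_distrib_right mult_ac sum.swap[of _ B])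
  have Psum: "(\<Sum>b\<in>B. (b \<bullet> v) *\<^sub>R b) = (\<Sum>b\<in>B. (b \<bullet> v / (b \<bullet> b)) *\<^sub>R b)" for v
    by (rule sum.cong) (simp_all add: bb)
  have PU: "PiM *v v \<in> U" for v
  proof -
    have "(\<Sum>b\<in>B. (b \<bullet> v) *\<^sub>R b) \<in> span B"
      by (intro span_sum span_scale span_base) 
    thus ?thesis using Pv spB by simp
  qed
  have Pid: "PiM *v u = u" if "u \<in> U" for u
  proof -
    define r where "r = u - PiM *v u"
    have "r \<in> span B" unfolding r_def by (metis span_diff spB that PU)
    hence "orthogonal r (u - (\<Sum>b\<in>B. (b \<bullet> u / (b \<bullet> b)) *\<^sub>R b))"
      by (rule Gram_Schmidt_step[OF orth])
    hence "orthogonal r r" by (simp add: r_def Pv Psum)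
    thus ?thesis by (simp add: r_def orthogonal_def)
  qed
  have Ppsd: "0 \<le> v \<bullet> (PiM *v v)" for v
    by (simp add: Pv inner_sum_right inner_commute[of v] sum_nonneg)
  have Psym: "transpose PiM = PiM"
    by (simp add: PiM_def transpose_def vec_eq_iff mult.commute)
  have KP: "K *v (PiM *v v) = 0" for v using PU U_def by simp
  have PK: "PiM *v (K *v v) = 0" for v
  proof -
    have "b \<bullet> (K *v v) = 0" if "b \<in> B" for b
      using sym_dot[OF sym, of b v] BU that U_def by auto
    thus ?thesis by (simp add: Pv)
  qed
  have PP: "PiM *v (PiM *v v) = PiM *v v" for v using Pid PU by blast
  have Pg: "PiM *v g = 0" if "\<And>u. K *v u = 0 \<Longrightarrow> g \<bullet> u = 0" for g
  proof -
    have "b \<bullet> g = 0" if "b \<in> B" for b using that BU U_def \<open>\<And>u. K *v u = 0 \<Longrightarrow> g \<bullet> u = 0\<close>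
      by (auto simp: inner_commute)
    thus ?thesis by (simp add: Pv)
  qed
  have inj: "\<forall>v. (K + PiM) *v v = 0 \<longrightarrow> v = 0"
  proof (intro allI impI)
    fix v assume "(K + PiM) *v v = 0"
    hence "v \<bullet> (K *v v) + v \<bullet> (PiM *v v) = 0"
      by (simp add: matrix_vector_mult_add_rdistrib inner_add_right[symmetric])
    hence k0: "v \<bullet> (K *v v) = 0" and p0: "v \<bullet> (PiM *v v) = 0" using psd[of v] Ppsd[of v] by linarith+
    have "K *v v = 0" by (rule psd_zero[OF sym psd k0])
    hence "PiM *v v = v" using Pid U_def by simp
    thus "v = 0" using p0 by simp
  qed
  obtain R where RL: "R ** (K + PiM) = mat 1"
    using matrix_left_invertible_ker[of "K + PiM"] inj by blast
  hence RR: "(K + PiM) ** R = mat 1" using matrix_left_right_inverse by blast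
  have RL': "R *v (K *v w) + R *v (PiM *v w) = w" for w
    using RL by (metis matrix_vector_mul_assoc matrix_vector_mul_lid matrix_vector_mult_add_rdistrib matrix_vector_right_distrib)
  have RR': "K *v (R *v w) + PiM *v (R *v w) = w" for w
    using RR by (metis matrix_vector_mul_assoc matrix_vector_mul_lid matrix_vector_mult_add_rdistrib)
  have PR: "PiM *v (R *v w) = PiM *v w" for w
    using arg_cong[OF RR'[of w], of "\<lambda>z. PiM *v z"] by (simp add: matrix_vector_right_distrib PK PP)
  have RP: "R *v (PiM *v w) = PiM *v w" for w
    using RL'[of "PiM *v w"] by (simp add: KP PP)
  define Y where "Y = R - PiM"
  have Yv: "Y *v w = R *v w - PiM *v w" for w by (simp add: Y_def matrix_vector_mult_diff_rdistrib)
  have KY: "K *v (Y *v w) = w - PiM *v w" for w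
    using RR'[of w] by (simp add: Yv matrix_vector_mult_diff_distrib KP PR algebra_simps)
  have YK: "Y *v (K *v w) = w - PiM *v w" for w
    using RL'[of w] by (simp add: Yv PK RP algebra_simps)
  have PY: "PiM *v (Y *v w) = 0" for w
    by (simp add: Yv matrix_vector_mult_diff_distrib PR PP)
  have IP: "transpose (mat 1 - PiM) = mat 1 - PiM"
    using Psym by (simp add: vec_eq_iff transpose_def mat_def)
  have isY: "is_mp_inverse K Y"
    unfolding is_mp_inverse_def
  proof (intro conjI)
    show "K ** Y ** K = K"
      by (simp add: matrix_eq matrix_vector_mul_assoc[symmetric] KY PK)
    show "Y ** K ** Y = Y"
      by (simp add: matrix_eq matrix_vector_mul_assoc[symmetric] YK PY)
    have "K ** Y = mat 1 - PiM"
      by (simp add: matrix_eq matrix_vector_mul_assoc[symmetric] KY matrix_vector_mult_diff_rdistrib)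
    thus "transpose (K ** Y) = K ** Y" using IP by simp
    have "Y ** K = mat 1 - PiM"
      by (simp add: matrix_eq matrix_vector_mul_assoc[symmetric] YK matrix_vector_mult_diff_rdistrib)
    thus "transpose (Y ** K) = Y ** K" using IP by simp
  qed
  have mpY: "mp_inverse K = Y"
    unfolding mp_inverse_def using isY mp_unique[OF _ isY] by (rule the_equality)
  fix g assume g: "\<And>u. K *v u = 0 \<Longrightarrow> g \<bullet> u = 0"
  have 1: "K *v (Y *v g) = g" using KY Pg[OF g] by simp
  have 2: "u \<bullet> (Y *v g) = 0" if "K *v u = 0" for u
  proof -
    have "u = PiM *v u" using Pid that U_def by simp
    hence "u \<bullet> (Y *v g) = (PiM *v u) \<bullet> (Y *v g)" by simp
    also have "\<dots> = u \<bullet> (PiM *v (Y *v g))" by (rule sym_dot[OF Psym])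
    finally show ?thesis by (simp add: PY)
  qed
  show "K *v (mp_inverse K *v g) = g \<and> (\<forall>u. K *v u = 0 \<longrightarrow> u \<bullet> (mp_inverse K *v g) = 0)"
    using 1 2 mpY by simp
qed




lemma inner_sq_lin: "(a + d *\<^sub>R b) \<bullet> (a + d *\<^sub>R b) = a \<bullet> a + 2*d*(a \<bullet> b) + d^2*(b \<bullet> b)" for a b :: "'a::real_inner"
  by (simp add: inner_add_left inner_add_right inner_commute[of b a] power2_eq_square algebra_simps)

definition sol :: "real^'k^'k \<Rightarrow> real^'k \<Rightarrow> real \<Rightarrow> real^'k" where
  "sol H g lam = (SOME x. H *v x - lam *\<^sub>R x = g)"

definition FF :: "real^'k^'k \<Rightarrow> real^'k \<Rightarrow> real \<Rightarrow> real \<Rightarrow> real^'k \<Rightarrow> bool" where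
  "FF H g0 gam lam y \<longleftrightarrow> y \<noteq> 0 \<and> (H - lam *\<^sub>R mat 1) *v ((H - lam *\<^sub>R mat 1) *v y) = (1 / gam\<^sup>2) *\<^sub>R ((g0 \<bullet> y) *\<^sub>R g0)"

context
  fixes H :: "real^'k^'k" and g0 :: "real^'k" and gam :: real
  assumes sym: "transpose H = H" and g0: "g0 \<noteq> 0" and gam: "0 < gam"
begin

lemma Sdot: "(H *v x - l *\<^sub>R x) \<bullet> y = x \<bullet> (H *v y - l *\<^sub>R y)"
  using sym_dot[OF sym, of x y] by (simp add: inner_diff_left inner_diff_right)

lemma LB:
  assumes "l < lambda_min H"
  shows "(lambda_min H - l) * norm x \<le> norm (H *v x - l *\<^sub>R x)"
proof (cases "x = 0")
  case True thus ?thesis by simp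
next
  case False
  have "(lambda_min H - l) * (x \<bullet> x) \<le> x \<bullet> (H *v x - l *\<^sub>R x)"
    using lambda_min_facts(2)[OF sym, of x] by (simp add: inner_diff_right algebra_simps)
  also have "\<dots> \<le> norm x * norm (H *v x - l *\<^sub>R x)" by (rule norm_cauchy_schwarz)
  finally have "(lambda_min H - l) * norm x * norm x \<le> norm (H *v x - l *\<^sub>R x) * norm x"
    by (simp add: power2_norm_eq_inner[symmetric] power2_eq_square mult_ac)
  thus ?thesis using False by simp
qed

lemma inj_S:
  assumes "l < lambda_min H" "H *v x - l *\<^sub>R x = 0"
  shows "x = 0"
  using LB[OF assms(1), of x] assms by (simp add: mult_le_0_iff)

lemma sol_eq:
  assumes l: "l < lambda_min H"
  shows "H *v sol H g l - l *\<^sub>R sol H g l = g"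
proof -
  have inj: "\<forall>v. (H - l *\<^sub>R mat 1) *v v = 0 \<longrightarrow> v = 0"
    using inj_S[OF l] by (simp add: matrix_vector_mult_diff_rdistrib scal_mat)
  obtain R where "R ** (H - l *\<^sub>R mat 1) = mat 1"
    using matrix_left_invertible_ker[of "H - l *\<^sub>R mat 1"] inj by blast
  hence "(H - l *\<^sub>R mat 1) ** R = mat 1" using matrix_left_right_inverse by blast
  hence "(H - l *\<^sub>R mat 1) *v (R *v g) = g" by (metis matrix_vector_mul_assoc matrix_vector_mul_lid)
  hence "\<exists>x. H *v x - l *\<^sub>R x = g" by (auto simp: matrix_vector_mult_diff_rdistrib scal_mat)
  thus ?thesis unfolding sol_def by (rule someI_ex)
qed

lemma sol_unique:
  assumes l: "l < lambda_min H" and x: "H *v x - l *\<^sub>R x = g"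
  shows "sol H g l = x"
proof -
  have "H *v (sol H g l - x) - l *\<^sub>R (sol H g l - x) = 0"
    using sol_eq[OF l, of g] x by (simp add: matrix_vector_mult_diff_distrib algebra_simps)
  hence "sol H g l - x = 0" by (rule inj_S[OF l])
  thus ?thesis by simp
qed

lemma FF_alt: "FF H g0 gam lam y \<longleftrightarrow> y \<noteq> 0 \<and> H *v (H *v y - lam *\<^sub>R y) - lam *\<^sub>R (H *v y - lam *\<^sub>R y) = (1 / gam\<^sup>2) *\<^sub>R ((g0 \<bullet> y) *\<^sub>R g0)"
  by (simp add: FF_def matrix_vector_mult_diff_rdistrib scal_mat)

lemma FF_below:
  assumes l: "l < lambda_min H" and F: "FF H g0 gam l y"
  shows "g0 \<bullet> y \<noteq> 0 \<and> norm (sol H g0 l) = gam"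
proof -
  define z where "z = H *v y - l *\<^sub>R y"
  have y0: "y \<noteq> 0" and eq: "H *v z - l *\<^sub>R z = (1 / gam\<^sup>2) *\<^sub>R ((g0 \<bullet> y) *\<^sub>R g0)"
    using F by (auto simp: FF_alt z_def)
  have z0: "z \<noteq> 0" using inj_S[OF l, of y] y0 z_def by auto
  have gy: "g0 \<bullet> y \<noteq> 0"
  proof
    assume "g0 \<bullet> y = 0"
    hence "H *v z - l *\<^sub>R z = 0" using eq by simp
    thus False using inj_S[OF l] z0 by blast
  qed
  define c where "c = (g0 \<bullet> y) / gam^2"
  have c0: "c \<noteq> 0" using gy gam by (simp add: c_def)
  have "H *v ((1/c) *\<^sub>R z) - l *\<^sub>R ((1/c) *\<^sub>R z) = g0"
    using eq c0 by (simp add: matrix_vector_mult_scaleR c_def algebra_simps)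
  hence s: "sol H g0 l = (1/c) *\<^sub>R z" by (rule sol_unique[OF l])
  have "z \<bullet> z = y \<bullet> (H *v z - l *\<^sub>R z)" using Sdot[of y l z] by (simp add: z_def)
  also have "\<dots> = c * (g0 \<bullet> y)" using eq by (simp add: c_def inner_commute)
  finally have zz: "z \<bullet> z = c * (g0 \<bullet> y)" .
  have "(norm (sol H g0 l))^2 = (1/c)^2 * (z \<bullet> z)" by (simp add: s power2_eq_square flip: power2_norm_eq_inner)
  also have "\<dots> = gam^2" using c0 gy gam by (simp add: zz c_def power2_eq_square field_simps)
  finally have "(norm (sol H g0 l))^2 = gam^2" .
  hence "norm (sol H g0 l) = gam" using gam by (simp add: power2_eq_iff_nonneg)
  thus ?thesis using gy by simp
qed

lemma FF_from_sol:
  assumes l: "l < lambda_min H" and n: "norm (sol H g0 l) = gam"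
  shows "\<exists>y. FF H g0 gam l y"
proof -
  define x where "x = sol H g0 l"
  define y where "y = sol H x l"
  have Sx: "H *v x - l *\<^sub>R x = g0" using sol_eq[OF l] x_def by simp
  have Sy: "H *v y - l *\<^sub>R y = x" using sol_eq[OF l] y_def by simp
  have "g0 \<bullet> y = x \<bullet> x" using Sdot[of x l y] Sx Sy by simp
  also have "\<dots> = gam^2" using n x_def by (metis power2_norm_eq_inner)
  finally have gy: "g0 \<bullet> y = gam^2" .
  have "y \<noteq> 0" using Sy n gam x_def by auto
  hence "FF H g0 gam l y" using Sx Sy gy gam unfolding FF_alt by simp
  thus ?thesis by blast
qed


lemma sol_lip:
  assumes b: "b < lambda_min H"
  shows "(norm g0 / (lambda_min H - b)^2)-lipschitz_on {a..b} (\<lambda>l. norm (sol H g0 l))"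
proof (rule lipschitz_onI)
  define d where "d = lambda_min H - b"
  have d0: "0 < d" using b d_def by simp
  show "0 \<le> norm g0 / (lambda_min H - b)^2" by simp
  fix l1 l2 assume l: "l1 \<in> {a..b}" "l2 \<in> {a..b}"
  have l1: "l1 < lambda_min H" and l2: "l2 < lambda_min H" using l b by auto
  define x1 where "x1 = sol H g0 l1"
  define x2 where "x2 = sol H g0 l2"
  have e1: "H *v x1 - l1 *\<^sub>R x1 = g0" using sol_eq[OF l1] x1_def by simp
  have e2: "H *v x2 - l2 *\<^sub>R x2 = g0" using sol_eq[OF l2] x2_def by simp
  have "H *v (x1 - x2) - l1 *\<^sub>R (x1 - x2) = (l1 - l2) *\<^sub>R x2"
    using e1 e2 by (simp add: matrix_vector_mult_diff_distrib algebra_simps)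
  hence i1: "(lambda_min H - l1) * norm (x1 - x2) \<le> \<bar>l1 - l2\<bar> * norm x2"
    using LB[OF l1, of "x1 - x2"] by simp
  have i2: "(lambda_min H - l2) * norm x2 \<le> norm g0" using LB[OF l2, of x2] e2 by simp
  have dl1: "d \<le> lambda_min H - l1" and dl2: "d \<le> lambda_min H - l2" using l d_def by auto
  have j1: "d * norm (x1 - x2) \<le> \<bar>l1 - l2\<bar> * norm x2"
    using i1 dl1 mult_right_mono[OF dl1 norm_ge_zero[of "x1 - x2"]] by linarith
  have j2: "d * norm x2 \<le> norm g0"
    using i2 mult_right_mono[OF dl2 norm_ge_zero[of x2]] by linarith
  have "d * (d * norm (x1 - x2)) \<le> d * (\<bar>l1 - l2\<bar> * norm x2)"
    using j1 d0 by simp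
  also have "\<dots> = \<bar>l1 - l2\<bar> * (d * norm x2)" by simp
  also have "\<dots> \<le> \<bar>l1 - l2\<bar> * norm g0" using j2 by (simp add: mult_left_mono)
  finally have "d^2 * norm (x1 - x2) \<le> \<bar>l1 - l2\<bar> * norm g0" by (simp add: power2_eq_square mult_ac)
  hence "norm (x1 - x2) \<le> norm g0 / d^2 * \<bar>l1 - l2\<bar>" using d0 by (simp add: field_simps)
  moreover have "dist (norm x1) (norm x2) \<le> norm (x1 - x2)"
    by (simp add: dist_real_def norm_triangle_ineq3)
  ultimately show "dist (norm (sol H g0 l1)) (norm (sol H g0 l2)) \<le> norm g0 / (lambda_min H - b)^2 * dist l1 l2"
    using x1_def x2_def d_def by (simp add: dist_real_def)
qed

lemma root_exists:
  assumes b: "b < lambda_min H" and nb: "gam \<le> norm (sol H g0 b)"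
  shows "\<exists>l<lambda_min H. norm (sol H g0 l) = gam"
proof -
  define a where "a = min b (lambda_min H - 1 - 2 * norm g0 / gam)"
  have ab: "a \<le> b" by (simp add: a_def)
  have a: "a < lambda_min H" using ab b by simp
  have ma: "1 + 2 * norm g0 / gam \<le> lambda_min H - a" by (simp add: a_def)
  have na: "norm (sol H g0 a) \<le> gam"
  proof (rule ccontr)
    assume "\<not> ?thesis"
    hence gt: "gam < norm (sol H g0 a)" by simp
    have "(lambda_min H - a) * norm (sol H g0 a) \<le> norm g0" using LB[OF a, of "sol H g0 a"] sol_eq[OF a] by simp
    moreover have "(1 + 2 * norm g0 / gam) * norm (sol H g0 a) \<le> (lambda_min H - a) * norm (sol H g0 a)"
      using ma by (simp add: mult_right_mono)
    moreover have "(1 + 2 * norm g0 / gam) * gam < (1 + 2 * norm g0 / gam) * norm (sol H g0 a)"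
      using gt gam by (intro mult_strict_left_mono) (auto intro: add_pos_nonneg)
    moreover have "(1 + 2 * norm g0 / gam) * gam = gam + 2 * norm g0" using gam by (simp add: field_simps)
    ultimately show False using gam by (smt (verit) norm_ge_zero)
  qed
  have cont: "continuous_on {a..b} (\<lambda>l. norm (sol H g0 l))"
    by (rule lipschitz_on_continuous_on[OF sol_lip[OF b]])
  obtain l where "a \<le> l" "l \<le> b" "norm (sol H g0 l) = gam"
    using IVT'[of "\<lambda>l. norm (sol H g0 l)", OF na nb ab cont] by blast
  thus ?thesis using b by (intro exI[of _ l]) auto
qed

lemma case_a:
  assumes u: "H *v u = lambda_min H *\<^sub>R u" and gu: "g0 \<bullet> u \<noteq> 0"
  shows "\<exists>b<lambda_min H. gam \<le> norm (sol H g0 b)"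
proof -
  have u0: "u \<noteq> 0" using gu by auto
  define d where "d = \<bar>g0 \<bullet> u\<bar> / (2 * gam * norm u)"
  have d0: "0 < d" using gu u0 gam by (simp add: d_def)
  define b where "b = lambda_min H - d"
  have b: "b < lambda_min H" using d0 b_def by simp
  define x where "x = sol H g0 b"
  have Sx: "H *v x - b *\<^sub>R x = g0" using sol_eq[OF b] x_def by simp
  have "g0 \<bullet> u = x \<bullet> (H *v u - b *\<^sub>R u)" using Sdot[of x b u] Sx by simp
  also have "\<dots> = d * (x \<bullet> u)" using u by (simp add: b_def algebra_simps)
  finally have "\<bar>g0 \<bullet> u\<bar> = d * \<bar>x \<bullet> u\<bar>" using d0 by (simp add: abs_mult)
  also have "\<dots> \<le> d * (norm x * norm u)" using d0 by (simp add: Cauchy_Schwarz_ineq2)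
  finally have "\<bar>g0 \<bullet> u\<bar> \<le> \<bar>g0 \<bullet> u\<bar> / (2 * gam * norm u) * (norm x * norm u)" by (simp add: d_def)
  hence "2 * gam * norm u * \<bar>g0 \<bullet> u\<bar> \<le> \<bar>g0 \<bullet> u\<bar> * (norm x * norm u)"
    using gam u0 by (simp add: field_simps)
  hence "2 * gam \<le> norm x" using gu u0 by (simp add: mult_ac)
  hence "gam \<le> norm x" using gam by simp
  thus ?thesis using b x_def by blast
qed


lemma psdH: "0 \<le> x \<bullet> (H *v x - lambda_min H *\<^sub>R x)"
  using lambda_min_facts(2)[OF sym, of x] by (simp add: inner_diff_right)

lemma case_b:
  assumes x0: "H *v x0 - lambda_min H *\<^sub>R x0 = g0"
    and orth: "\<And>u. H *v u = lambda_min H *\<^sub>R u \<Longrightarrow> u \<bullet> x0 = 0"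
    and gt: "gam < norm x0"
  shows "\<exists>b<lambda_min H. gam \<le> norm (sol H g0 b)"
proof -
  define mu where "mu = lambda_min H"
  define K where "K = H - mu *\<^sub>R mat 1"
  have Kv: "K *v v = H *v v - mu *\<^sub>R v" for v by (simp add: K_def matrix_vector_mult_diff_rdistrib scal_mat)
  define W where "W = {v. \<forall>u. H *v u = mu *\<^sub>R u \<longrightarrow> u \<bullet> v = 0}"
  have subW: "subspace W" unfolding subspace_def W_def by (simp add: inner_add_right)
  have "\<exists>e>0. \<forall>x\<in>W. e * norm x \<le> norm (K *v x)"
  proof (rule injective_imp_isometric[OF closed_subspace[OF subW] subW])
    show "bounded_linear ((*v) K)" by simp
    show "\<forall>x\<in>W. K *v x = 0 \<longrightarrow> x = 0"
    proof (intro ballI impI)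
      fix x assume "x \<in> W" "K *v x = 0"
      hence "x \<bullet> x = 0" unfolding W_def using Kv by auto
      thus "x = 0" by simp
    qed
  qed
  then obtain e where e0: "0 < e" and eW: "\<And>x. x \<in> W \<Longrightarrow> e * norm x \<le> norm (K *v x)" by blast
  have nx0: "0 < norm x0" using gt gam by linarith
  define d where "d = e * (norm x0 - gam) / (2 * norm x0)"
  have d0: "0 < d" using e0 gt nx0 by (simp add: d_def)
  define b where "b = mu - d"
  have b: "b < lambda_min H" using d0 b_def mu_def by simp
  define x where "x = sol H g0 b"
  have Sx: "H *v x - b *\<^sub>R x = g0" using sol_eq[OF b] x_def by simp
  define w where "w = x0 - x"
  have Kw: "K *v w + d *\<^sub>R w = d *\<^sub>R x0"
    using Sx x0 by (simp add: Kv w_def b_def mu_def matrix_vector_mult_diff_distrib algebra_simps)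
  have wW: "w \<in> W" unfolding W_def
  proof (intro CollectI allI impI)
    fix u assume u: "H *v u = mu *\<^sub>R u"
    have "u \<bullet> (K *v w) = (K *v u) \<bullet> w" using Sdot[of u mu w] by (simp add: Kv)
    also have "\<dots> = 0" using u by (simp add: Kv)
    finally have "u \<bullet> (K *v w + d *\<^sub>R w) = d * (u \<bullet> w)" by (simp add: inner_add_right)
    moreover have "u \<bullet> (d *\<^sub>R x0) = 0" using orth u mu_def by simp
    ultimately show "u \<bullet> w = 0" using Kw d0 by simp
  qed
  have "(norm (K *v w))^2 \<le> (norm (K *v w + d *\<^sub>R w))^2"
  proof -
    have p: "0 \<le> w \<bullet> (K *v w)" using psdH[of w] by (simp add: Kv mu_def)
    have "(K *v w + d *\<^sub>R w) \<bullet> (K *v w + d *\<^sub>R w) = (K *v w) \<bullet> (K *v w) + 2 * d * (w \<bullet> (K *v w)) + d^2 * (w \<bullet> w)"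
      by (subst inner_sq_lin) (simp only: inner_commute[of "K *v w" w])
    hence "(norm (K *v w + d *\<^sub>R w))^2 = (norm (K *v w))^2 + 2 * d * (w \<bullet> (K *v w)) + d^2 * (norm w)^2"
      by (simp only: power2_norm_eq_inner)
    moreover have "0 \<le> 2 * d * (w \<bullet> (K *v w))" using p d0 by simp
    moreover have "0 \<le> d^2 * (norm w)^2" by simp
    ultimately show ?thesis by linarith
  qed
  hence n1: "norm (K *v w) \<le> norm (K *v w + d *\<^sub>R w)" by (rule power2_le_imp_le) simp
  have n2: "norm (K *v w + d *\<^sub>R w) = d * norm x0" using d0 by (simp only: Kw norm_scaleR abs_of_pos)
  have "e * norm w \<le> d * norm x0" using eW[OF wW] n1 n2 by linarith
  hence "e * norm w \<le> e * ((norm x0 - gam) / 2)" using nx0 by (simp add: d_def)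
  hence nw: "norm w \<le> (norm x0 - gam) / 2" using e0 by simp
  have "norm x0 - norm x \<le> norm w" unfolding w_def by (rule norm_triangle_ineq2)
  moreover have "2 * norm w \<le> norm x0 - gam" using nw by simp
  ultimately have "gam \<le> norm x" using gt by linarith
  thus ?thesis using b x_def by blast
qed

lemma below_x0:
  assumes x0: "H *v x0 - lambda_min H *\<^sub>R x0 = g0" and l: "l < lambda_min H"
  shows "norm (sol H g0 l) < norm x0"
proof -
  define x where "x = sol H g0 l"
  define d where "d = lambda_min H - l"
  have d0: "0 < d" using l d_def by simp
  have Sx: "H *v x - l *\<^sub>R x = g0" using sol_eq[OF l] x_def by simp
  have x0n: "x \<noteq> 0" using Sx g0 by auto
  define w where "w = x0 - x"
  have Kw: "H *v w - lambda_min H *\<^sub>R w = d *\<^sub>R x"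
    using Sx x0 by (simp add: w_def d_def matrix_vector_mult_diff_distrib algebra_simps)
  have "0 \<le> w \<bullet> (d *\<^sub>R x)" using psdH[of w] Kw by simp
  hence wx: "0 \<le> w \<bullet> x" using d0 by (simp add: zero_le_mult_iff)
  hence xx: "x \<bullet> x \<le> x0 \<bullet> x" by (simp add: w_def inner_diff_left)
  also have "\<dots> \<le> norm x0 * norm x" by (rule norm_cauchy_schwarz)
  finally have "norm x * norm x \<le> norm x0 * norm x" by (simp add: power2_eq_square flip: power2_norm_eq_inner)
  hence le: "norm x \<le> norm x0" using x0n by simp
  have "norm x \<noteq> norm x0"
  proof
    assume eq: "norm x = norm x0"
    have "(norm w)^2 = (norm x0)^2 - 2 * (x0 \<bullet> x) + (norm x)^2"
      by (simp add: w_def power2_norm_eq_inner inner_diff_left inner_diff_right inner_commute)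
    also have "\<dots> \<le> 0"
    proof -
      have "(norm x0)^2 = x \<bullet> x" using eq by (simp add: power2_norm_eq_inner[symmetric])
      thus ?thesis using xx by (simp add: power2_norm_eq_inner)
    qed
    finally have "w = 0" by simp
    hence "d *\<^sub>R x = 0" using Kw by simp
    thus False using d0 x0n by simp
  qed
  thus ?thesis using le x_def by simp
qed

lemma reduced:
  "(\<exists>lam y. FF H g0 gam lam y \<and> (\<forall>mu w. FF H g0 gam mu w \<longrightarrow> lam \<le> mu) \<and> g0 \<bullet> y = 0) \<longleftrightarrow>
   ((\<forall>u \<in> eigenspace_of H (lambda_min H). g0 \<bullet> u = 0) \<and>
    norm (mp_inverse (H - lambda_min H *\<^sub>R mat 1) *v g0) \<le> gam)"
proof -
  define mu where "mu = lambda_min H"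
  define K where "K = H - mu *\<^sub>R mat 1"
  have Kv: "K *v v = H *v v - mu *\<^sub>R v" for v by (simp add: K_def matrix_vector_mult_diff_rdistrib scal_mat)
  have symK: "transpose K = K" using sym by (simp add: K_def transpose_def vec_eq_iff mat_def)
  have psdK: "0 \<le> x \<bullet> (K *v x)" for x using psdH[of x] by (simp add: Kv mu_def)
  have eig: "u \<in> eigenspace_of H mu \<longleftrightarrow> K *v u = 0" for u by (simp add: eigenspace_of_def Kv)
  define x0 where "x0 = mp_inverse K *v g0"
  show ?thesis unfolding K_def[symmetric] mu_def[symmetric] x0_def[symmetric]
  proof
    assume "\<exists>lam y. FF H g0 gam lam y \<and> (\<forall>mu w. FF H g0 gam mu w \<longrightarrow> lam \<le> mu) \<and> g0 \<bullet> y = 0"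
    then obtain lam y where F: "FF H g0 gam lam y" and mn: "\<And>mu w. FF H g0 gam mu w \<Longrightarrow> lam \<le> mu" and gy: "g0 \<bullet> y = 0" by blast
    show "(\<forall>u\<in>eigenspace_of H mu. g0 \<bullet> u = 0) \<and> norm x0 \<le> gam"
    proof (rule ccontr)
      assume neg: "\<not> ?thesis"
      have "\<exists>b<lambda_min H. gam \<le> norm (sol H g0 b)"
      proof (cases "\<forall>u\<in>eigenspace_of H mu. g0 \<bullet> u = 0")
        case False
        then obtain u where "u \<in> eigenspace_of H mu" "g0 \<bullet> u \<noteq> 0" by blast
        thus ?thesis using case_a by (simp add: eigenspace_of_def mu_def)
      next
        case True
        hence ngt: "gam < norm x0" using neg by simp
        have "K *v x0 = g0 \<and> (\<forall>u. K *v u = 0 \<longrightarrow> u \<bullet> x0 = 0)"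
          unfolding x0_def by (rule mp_sym[OF symK psdK]) (use True eig in auto)
        thus ?thesis using case_b[of x0] ngt by (simp add: Kv mu_def)
      qed
      then obtain b where "b < lambda_min H" "gam \<le> norm (sol H g0 b)" by blast
      then obtain l1 where l1: "l1 < lambda_min H" "norm (sol H g0 l1) = gam" using root_exists by blast
      then obtain y1 where "FF H g0 gam l1 y1" using FF_from_sol by blast
      hence "lam < lambda_min H" using mn l1 by force
      thus False using FF_below F gy by blast
    qed
  next
    assume r: "(\<forall>u\<in>eigenspace_of H mu. g0 \<bullet> u = 0) \<and> norm x0 \<le> gam"
    have "K *v x0 = g0 \<and> (\<forall>u. K *v u = 0 \<longrightarrow> u \<bullet> x0 = 0)"
      unfolding x0_def by (rule mp_sym[OF symK psdK]) (use r eig in auto)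
    hence Kx0: "H *v x0 - lambda_min H *\<^sub>R x0 = g0" by (simp add: Kv mu_def)
    obtain u where u: "u \<noteq> 0" "H *v u = mu *\<^sub>R u" using lambda_min_facts(1)[OF sym] mu_def by blast
    have gu: "g0 \<bullet> u = 0" using r u eigenspace_of_def by auto
    have Fu: "FF H g0 gam mu u" using u gu by (simp add: FF_alt)
    have "mu \<le> mu'" if "FF H g0 gam mu' w" for mu' w
    proof (rule ccontr)
      assume "\<not> mu \<le> mu'"
      hence l: "mu' < lambda_min H" using mu_def by simp
      have "norm (sol H g0 mu') = gam" using FF_below[OF l that] by simp
      moreover have "norm (sol H g0 mu') < norm x0" by (rule below_x0[OF Kx0 l])
      ultimately show False using r by simp
    qed
    thus "\<exists>lam y. FF H g0 gam lam y \<and> (\<forall>mu w. FF H g0 gam mu w \<longrightarrow> lam \<le> mu) \<and> g0 \<bullet> y = 0"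
      using Fu gu by blast
  qed
qed

end




lemma mv_transpose_dot:
  fixes M :: "real^'a^'b"
  shows "(M *v x) \<bullet> y = x \<bullet> (transpose M *v y)"
proof -
  have "x \<bullet> (transpose M *v y) = (y v* M) \<bullet> x" by (simp add: inner_commute)
  also have "\<dots> = y \<bullet> (M *v x)" by (rule dot_lmul_matrix)
  finally show ?thesis by (simp add: inner_commute)
qed

declare transpose_matrix_vector[simp del]

theorem theorem2p12:
  fixes A :: "real^'n^'n" and C :: "real^'m^'n" and b :: "real^'m"
    and S1 :: "real^'k^'n"
  assumes "transpose A = A"
    and "CARD('m) < CARD('n)"
    and "rank C = CARD('m)"
    and "norm (n0_of C b) < 1"
    and "b0_of A C b \<noteq> 0"
    and "transpose S1 ** S1 = mat 1"
    and "range (\<lambda>y. S1 *v y) = {x. transpose C *v x = 0}"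
  shows "qep_hard_case A C b \<longleftrightarrow>
    (let H = transpose S1 ** A ** S1; g0 = transpose S1 *v b0_of A C b in
      (\<forall>u \<in> eigenspace_of H (lambda_min H). g0 \<bullet> u = 0) \<and>
      norm (mp_inverse (H - lambda_min H *\<^sub>R mat 1) *v g0) \<le> gamma_of C b)"
proof -
  note symA = assms(1) and rk = assms(3) and n0 = assms(4) and b0ne = assms(5)
    and orthS = assms(6) and rng = assms(7)
  define H where "H = transpose S1 ** A ** S1"
  define b0 where "b0 = b0_of A C b"
  define g0 where "g0 = transpose S1 *v b0"
  define gam where "gam = gamma_of C b"
  define G where "G = transpose C ** C"
  define Mi where "Mi = matrix_inv G"
  have StS: "transpose S1 *v (S1 *v y) = y" for y
    by (simp add: matrix_vector_mul_assoc orthS)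
  have CS: "transpose C *v (S1 *v y) = 0" for y using rng by blast
  have inN: "\<exists>y. x = S1 *v y" if "transpose C *v x = 0" for x
    using that rng by (metis (mono_tags, lifting) mem_Collect_eq rangeE)
  have injC: "inj ((*v) C)" using rk full_rank_injective by blast
  have Gker: "\<forall>x. G *v x = 0 \<longrightarrow> x = 0"
  proof (intro allI impI)
    fix x assume "G *v x = 0"
    hence "x \<bullet> (transpose C *v (C *v x)) = 0" by (simp add: G_def matrix_vector_mul_assoc)
    hence "(C *v x) \<bullet> (C *v x) = 0" by (simp add: mv_transpose_dot)
    hence "C *v x = 0" by simp
    thus "x = 0" using injC by (metis inj_eq matrix_vector_mult_0_right)
  qed
  obtain R where "R ** G = mat 1" using matrix_left_invertible_ker[of G] Gker by blast
  hence "G ** R = mat 1 \<and> R ** G = mat 1" using matrix_left_right_inverse by blast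
  hence "G ** Mi = mat 1 \<and> Mi ** G = mat 1"
    unfolding Mi_def matrix_inv_def by (rule someI)
  hence GMi: "G *v (Mi *v v) = v" for v by (metis matrix_vector_mul_assoc matrix_vector_mul_lid)
  have Pv: "P_of C *v x = x - C *v (Mi *v (transpose C *v x))" for x
    by (simp add: P_of_def Mi_def G_def matrix_vector_mult_diff_rdistrib matrix_vector_mul_assoc matrix_mul_assoc)
  have PS: "P_of C *v x = S1 *v (transpose S1 *v x)" for x
  proof -
    have "transpose C *v (P_of C *v x) = 0"
      using GMi[of "transpose C *v x"] by (simp add: Pv matrix_vector_mult_diff_distrib G_def matrix_vector_mul_assoc matrix_mul_assoc)
    then obtain y1 where y1: "P_of C *v x = S1 *v y1" using inN by blast
    define z where "z = y1 - transpose S1 *v x"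
    define d where "d = P_of C *v x - S1 *v (transpose S1 *v x)"
    have dz: "d = S1 *v z" by (simp add: d_def z_def y1 matrix_vector_mult_diff_distrib)
    have "d \<bullet> (x - S1 *v (transpose S1 *v x)) = 0"
      by (simp add: dz mv_transpose_dot matrix_vector_mult_diff_distrib StS)
    moreover have "d \<bullet> (x - P_of C *v x) = 0"
    proof -
      have "d \<bullet> (x - P_of C *v x) = (C *v (Mi *v (transpose C *v x))) \<bullet> d" by (simp add: Pv inner_commute)
      also have "\<dots> = (Mi *v (transpose C *v x)) \<bullet> (transpose C *v d)" by (rule mv_transpose_dot)
      also have "\<dots> = 0" by (simp add: dz CS)
      finally show ?thesis .
    qed
    ultimately have "d \<bullet> d = 0"
      by (simp add: d_def inner_diff_right inner_diff_left algebra_simps)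
    thus ?thesis by (simp add: d_def)
  qed
  have b0g0: "b0 = S1 *v g0"
    by (simp add: b0_def b0_of_def g0_def PS StS)
  have g0ne: "g0 \<noteq> 0" using b0ne b0g0 b0_def by auto
  have gam0: "0 < gam"
  proof -
    have "(norm (n0_of C b))^2 < 1" using n0 by (simp add: power_less_one_iff abs_square_less_1)
    thus ?thesis by (simp add: gam_def gamma_of_def)
  qed
  have symH: "transpose H = H"
    by (simp add: H_def matrix_transpose_mul symA matrix_mul_assoc)
  have PAP: "(P_of C ** A ** P_of C - lam *\<^sub>R mat 1) *v (S1 *v y) = S1 *v ((H - lam *\<^sub>R mat 1) *v y)" for lam y
    by (simp add: matrix_vector_mult_diff_rdistrib scal_mat matrix_vector_mul_assoc[symmetric] PS StS H_def
        matrix_vector_mult_diff_distrib matrix_vector_mult_scaleR)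
  have injS: "S1 *v u = S1 *v v \<longleftrightarrow> u = v" for u v by (metis StS)
  have feas: "qep_feasible A C b lam (S1 *v y) \<longleftrightarrow> FF H g0 gam lam y" for lam y
  proof -
    have "b0 \<bullet> (S1 *v y) = g0 \<bullet> y" by (simp add: b0g0 mv_transpose_dot StS)
    hence "(1 / gam\<^sup>2) *\<^sub>R ((b0 \<bullet> (S1 *v y)) *\<^sub>R b0) = S1 *v ((1 / gam\<^sup>2) *\<^sub>R ((g0 \<bullet> y) *\<^sub>R g0))"
      by (simp add: b0g0 matrix_vector_mult_scaleR)
    moreover have "S1 *v y \<noteq> 0 \<longleftrightarrow> y \<noteq> 0" by (metis StS matrix_vector_mult_0_right)
    ultimately show ?thesis
      unfolding qep_feasible_def FF_def Let_def
      by (simp add: CS PAP injS b0_def gam_def)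
  qed
  have feas2: "qep_feasible A C b lam z \<longleftrightarrow> (\<exists>y. z = S1 *v y \<and> FF H g0 gam lam y)" for lam z
    using feas inN by (metis qep_feasible_def)
  have dotb: "b0_of A C b \<bullet> (S1 *v y) = g0 \<bullet> y" for y
    by (simp add: b0_def[symmetric] b0g0 mv_transpose_dot StS)
  have "qep_hard_case A C b \<longleftrightarrow>
    (\<exists>lam y. FF H g0 gam lam y \<and> (\<forall>mu w. FF H g0 gam mu w \<longrightarrow> lam \<le> mu) \<and> g0 \<bullet> y = 0)"
    unfolding qep_hard_case_def qep_minimizer_def feas2
  proof
    assume "\<exists>lam z. ((\<exists>y. z = S1 *v y \<and> FF H g0 gam lam y) \<and>
        (\<forall>mu w. (\<exists>y. w = S1 *v y \<and> FF H g0 gam mu y) \<longrightarrow> lam \<le> mu)) \<and> b0_of A C b \<bullet> z = 0"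
    then obtain lam y where "FF H g0 gam lam y" "\<forall>mu w. (\<exists>y. w = S1 *v y \<and> FF H g0 gam mu y) \<longrightarrow> lam \<le> mu"
      "b0_of A C b \<bullet> (S1 *v y) = 0" by blast
    moreover have "\<forall>mu w. FF H g0 gam mu w \<longrightarrow> lam \<le> mu" using calculation(2) by blast
    ultimately show "\<exists>lam y. FF H g0 gam lam y \<and> (\<forall>mu w. FF H g0 gam mu w \<longrightarrow> lam \<le> mu) \<and> g0 \<bullet> y = 0"
      using dotb[of y] by auto
  next
    assume "\<exists>lam y. FF H g0 gam lam y \<and> (\<forall>mu w. FF H g0 gam mu w \<longrightarrow> lam \<le> mu) \<and> g0 \<bullet> y = 0"
    then obtain lam y where h: "FF H g0 gam lam y" "\<forall>mu w. FF H g0 gam mu w \<longrightarrow> lam \<le> mu" "g0 \<bullet> y = 0" by blast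
    have "\<forall>mu w. (\<exists>y. w = S1 *v y \<and> FF H g0 gam mu y) \<longrightarrow> lam \<le> mu" using h(2) by blast
    moreover have "b0_of A C b \<bullet> (S1 *v y) = 0" using h(3) dotb[of y] by simp
    ultimately show "\<exists>lam z. ((\<exists>y. z = S1 *v y \<and> FF H g0 gam lam y) \<and>
        (\<forall>mu w. (\<exists>y. w = S1 *v y \<and> FF H g0 gam mu y) \<longrightarrow> lam \<le> mu)) \<and> b0_of A C b \<bullet> z = 0"
      using h(1) by blast
  qed
  also have "\<dots> \<longleftrightarrow> ((\<forall>u \<in> eigenspace_of H (lambda_min H). g0 \<bullet> u = 0) \<and>
    norm (mp_inverse (H - lambda_min H *\<^sub>R mat 1) *v g0) \<le> gam)"
    by (rule reduced[OF symH g0ne gam0])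
  finally show ?thesis by (simp add: H_def g0_def b0_def gam_def Let_def)
qed


end
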